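(* Let $\Delta\ge 1$ and let $N = 2^{\lceil \log_2(2\Delta-1)\rceil}$. A palette is a data structure over the colour set $\{1,\dots,N\}$ consisting of a bit vector $A$ of length $N$ (where $A[c]=1$ means colour $c$ is used and $A[c]=0$ means it is available), an array $C$ of length $N$ storing for each used colour a pointer to the corresponding edge, and a segment tree over $A$ whose leaves store the entries of $A$ and whose internal nodes store the sum of the leaves in their subtree. Given two palettes $P$ and $Q$ such that exactly $a$ colours are used in $P$ and exactly $b$ colours are used in $Q$ (with $a+b+1\le N$), one can find a colour $c\in\{1,\dots,a+b+1\}$ that is available in both $P$ and $Q$ in $O(\log \Delta)$ time (and mark it as used in both palettes within the same time bound).
   Context: Model of computation: standard word-RAM; constant-time access to array entries and to the sums stored at segment-tree nodes. *)

theory Defs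
  imports Complex_Main
begin

text \<open>Palettes over the colour set {1..N}, N = 2^k.
  pA: bit vector (pA c = True iff colour c is used);
  pC: pointer array (edge stored for each used colour);
  pT: segment tree; node i at depth d (0 \<le> d \<le> k, i < 2^d) covers the
      colours i*2^(k-d)+1 .. (i+1)*2^(k-d) and stores the number of used
      colours in that block (sum of its leaves).\<close>

record 'e palette =
  pA :: "nat \<Rightarrow> bool"
  pC :: "nat \<Rightarrow> 'e option"
  pT :: "nat \<Rightarrow> nat \<Rightarrow> nat"

definition pal_k :: "nat \<Rightarrow> nat" where
  "pal_k \<Delta> = nat \<lceil>log 2 (2 * real \<Delta> - 1)\<rceil>"

definition pal_N :: "nat \<Rightarrow> nat" where
  "pal_N \<Delta> = 2 ^ pal_k \<Delta>"

definition valid_palette :: "nat \<Rightarrow> 'e palette \<Rightarrow> bool" where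
  "valid_palette k P \<longleftrightarrow>
     (\<forall>c. pA P c \<longrightarrow> c \<in> {1..2^k}) \<and>
     (\<forall>c. pC P c \<noteq> None \<longleftrightarrow> pA P c) \<and>
     (\<forall>d\<le>k. \<forall>i<2^d. pT P d i = card {c \<in> {i * 2^(k-d) + 1 .. (i+1) * 2^(k-d)}. pA P c})"

definition used_count :: "'e palette \<Rightarrow> nat" where
  "used_count P = card {c. pA P c}"

definition available :: "nat \<Rightarrow> 'e palette \<Rightarrow> nat \<Rightarrow> bool" where
  "available k P c \<longleftrightarrow> c \<in> {1..2^k} \<and> \<not> pA P c"

text \<open>The algorithm, instrumented with a cost counter (number of elementary
  word-RAM steps: node reads, writes). descend r k T1 T2 d i: simultaneous descent
  in both trees from node (d,i), with r levels remaining; returns the 0-based leaf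
  index reached and the cost.\<close>

primrec descend :: "nat \<Rightarrow> nat \<Rightarrow> (nat \<Rightarrow> nat \<Rightarrow> nat) \<Rightarrow> (nat \<Rightarrow> nat \<Rightarrow> nat)
                     \<Rightarrow> nat \<Rightarrow> nat \<Rightarrow> nat \<times> nat" where
  "descend 0 k T1 T2 d i = (i, 0)"
| "descend (Suc r) k T1 T2 d i =
     (let l = 2 * i;
          s = T1 (Suc d) l + T2 (Suc d) l;
          i' = (if s < 2 ^ (k - Suc d) then l else Suc l);
          (j, t) = descend r k T1 T2 (Suc d) i'
      in (j, t + 3))"

primrec inc_path :: "nat \<Rightarrow> nat \<Rightarrow> nat \<Rightarrow> (nat \<Rightarrow> nat \<Rightarrow> nat) \<Rightarrow> (nat \<Rightarrow> nat \<Rightarrow> nat) \<times> nat" where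
  "inc_path k leaf 0 T = (T(0 := (T 0)(0 := T 0 0 + 1)), 1)"
| "inc_path k leaf (Suc d) T =
     (let (T', t) = inc_path k leaf d T;
          i = leaf div 2 ^ (k - Suc d)
      in (T'(Suc d := (T' (Suc d))(i := T' (Suc d) i + 1)), t + 1))"

definition mark_used :: "nat \<Rightarrow> 'e palette \<Rightarrow> nat \<Rightarrow> 'e \<Rightarrow> 'e palette \<times> nat" where
  "mark_used k P c e =
     (let (T', t) = inc_path k (c - 1) k (pT P)
      in (P\<lparr>pA := (pA P)(c := True), pC := (pC P)(c := Some e), pT := T'\<rparr>, t + 2))"

definition find_and_mark :: "nat \<Rightarrow> 'e palette \<Rightarrow> 'e palette \<Rightarrow> 'e
                              \<Rightarrow> nat \<times> 'e palette \<times> 'e palette \<times> nat" where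
  "find_and_mark k P Q e =
     (let (j, t1) = descend k k (pT P) (pT Q) 0 0;
          c = j + 1;
          (P', t2) = mark_used k P c e;
          (Q', t3) = mark_used k Q c e
      in (c, P', Q', t1 + t2 + t3 + 1))"

end

theory Submission
  imports Defs
begin

definition UU :: "(nat \<Rightarrow> bool) \<Rightarrow> nat \<Rightarrow> nat" where
  "UU A x = card {c \<in> {1..x}. A c}"

lemma cnt_split:
  "UU A (x + y) = UU A x + card {c \<in> {x+1..x+y}. A c}"
proof -
  have "{c \<in> {1..x+y}. A c} = {c \<in> {1..x}. A c} \<union> {c \<in> {x+1..x+y}. A c}" by auto
  then show ?thesis unfolding UU_def
    by (simp add: card_Un_disjoint disjoint_iff)
qed

lemma UU_Suc: "UU A (Suc x) = UU A x + (if A (Suc x) then 1 else 0)"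
proof -
  have "{c. c = Suc x \<and> A c} = (if A (Suc x) then {Suc x} else {})" by auto
  then show ?thesis using cnt_split[of A x 1] by simp
qed

lemma T_U:
  assumes "\<forall>d'\<le>k. \<forall>i'<2^d'. T d' i' = card {c \<in> {i' * 2^(k-d') + 1 .. (i'+1) * 2^(k-d')}. A c}"
    and "d' \<le> k" "i' < 2^d'"
  shows "UU A (i' * 2^(k-d') + 2^(k-d')) = UU A (i' * 2^(k-d')) + T d' i'"
  using assms cnt_split[of A "i' * 2^(k-d')" "2^(k-d')"] by (simp add: add.commute)

lemma descend_correct:
  assumes "d + r = k" "i < 2^d"
    and T1: "\<forall>d'\<le>k. \<forall>i'<2^d'. T1 d' i' = card {c \<in> {i' * 2^(k-d') + 1 .. (i'+1) * 2^(k-d')}. A1 c}"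
    and T2: "\<forall>d'\<le>k. \<forall>i'<2^d'. T2 d' i' = card {c \<in> {i' * 2^(k-d') + 1 .. (i'+1) * 2^(k-d')}. A2 c}"
    and H1: "UU A1 (i*2^r + 2^r) + UU A2 (i*2^r + 2^r) < UU A1 (i*2^r) + UU A2 (i*2^r) + 2^r"
    and H2: "i*2^r \<le> UU A1 (i*2^r) + UU A2 (i*2^r)"
  shows "snd (descend r k T1 T2 d i) = 3*r \<and> fst (descend r k T1 T2 d i) < 2^k \<and>
     \<not> A1 (fst (descend r k T1 T2 d i) + 1) \<and> \<not> A2 (fst (descend r k T1 T2 d i) + 1) \<and>
     fst (descend r k T1 T2 d i) \<le> UU A1 (fst (descend r k T1 T2 d i)) + UU A2 (fst (descend r k T1 T2 d i))"
  using assms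
proof (induction r arbitrary: d i)
  case 0
  then show ?case using UU_Suc[of A1 i] UU_Suc[of A2 i] by (auto split: if_splits)
next
  case (Suc r)
  define S where "S = 2*i*2^r"
  define m :: nat where "m = 2^r"
  have kd: "k - Suc d = r" using Suc.prems by simp
  have l: "2*i < 2^Suc d" "Suc (2*i) < 2^Suc d" using Suc.prems by auto
  have e1: "UU A1 (S + m) = UU A1 S + T1 (Suc d) (2*i)"
    using T_U[OF T1 _ l(1)] Suc.prems kd unfolding S_def m_def by (simp add: mult.assoc)
  have e2: "UU A2 (S + m) = UU A2 S + T2 (Suc d) (2*i)"
    using T_U[OF T2 _ l(1)] Suc.prems kd unfolding S_def m_def by (simp add: mult.assoc)
  have h1: "UU A1 (S + m + m) + UU A2 (S + m + m) < UU A1 S + UU A2 S + m + m"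
    using Suc.prems(5) unfolding S_def m_def by (simp add: algebra_simps mult_2)
  have h2: "S \<le> UU A1 S + UU A2 S"
    using Suc.prems(6) unfolding S_def m_def by (simp add: algebra_simps)
  let ?s = "T1 (Suc d) (2*i) + T2 (Suc d) (2*i)"
  let ?i' = "if ?s < 2 ^ (k - Suc d) then 2*i else Suc (2*i)"
  have eq: "descend (Suc r) k T1 T2 d i =
      (fst (descend r k T1 T2 (Suc d) ?i'), snd (descend r k T1 T2 (Suc d) ?i') + 3)"
    by (simp add: Let_def split: prod.split)
  show ?case
  proof (cases "?s < 2 ^ (k - Suc d)")
    case True
    have "snd (descend r k T1 T2 (Suc d) (2*i)) = 3*r \<and> fst (descend r k T1 T2 (Suc d) (2*i)) < 2^k \<and>
     \<not> A1 (fst (descend r k T1 T2 (Suc d) (2*i)) + 1) \<and> \<not> A2 (fst (descend r k T1 T2 (Suc d) (2*i)) + 1) \<and>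
     fst (descend r k T1 T2 (Suc d) (2*i)) \<le> UU A1 (fst (descend r k T1 T2 (Suc d) (2*i))) + UU A2 (fst (descend r k T1 T2 (Suc d) (2*i)))"
      apply (rule Suc.IH)
      using Suc.prems l True e1 e2 h2 kd unfolding S_def m_def by (auto simp: mult.assoc)
    then show ?thesis using eq True by simp
  next
    case False
    have "snd (descend r k T1 T2 (Suc d) (Suc (2*i))) = 3*r \<and> fst (descend r k T1 T2 (Suc d) (Suc (2*i))) < 2^k \<and>
     \<not> A1 (fst (descend r k T1 T2 (Suc d) (Suc (2*i))) + 1) \<and> \<not> A2 (fst (descend r k T1 T2 (Suc d) (Suc (2*i))) + 1) \<and>
     fst (descend r k T1 T2 (Suc d) (Suc (2*i))) \<le> UU A1 (fst (descend r k T1 T2 (Suc d) (Suc (2*i)))) + UU A2 (fst (descend r k T1 T2 (Suc d) (Suc (2*i))))"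
    proof (rule Suc.IH)
      have sm: "Suc (2*i) * m = S + m" unfolding S_def m_def by simp
      have F: "\<not> ?s < m" using False kd m_def by simp
      show "UU A1 (Suc (2 * i) * 2 ^ r + 2 ^ r) + UU A2 (Suc (2 * i) * 2 ^ r + 2 ^ r)
        < UU A1 (Suc (2 * i) * 2 ^ r) + UU A2 (Suc (2 * i) * 2 ^ r) + 2 ^ r"
        unfolding m_def[symmetric] sm using h1 e1 e2 F by linarith
      show "Suc (2 * i) * 2 ^ r \<le> UU A1 (Suc (2 * i) * 2 ^ r) + UU A2 (Suc (2 * i) * 2 ^ r)"
        unfolding m_def[symmetric] sm using h2 e1 e2 F by linarith
    qed (use Suc.prems l in auto)
    then show ?thesis using eq False by simp
  qed
qed

lemma blk0: "(0::nat) < m \<Longrightarrow> (i*m \<le> x \<and> x < (i+1)*m) \<longleftrightarrow> i = x div m"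
  by (metis div_less_iff_less_mult le_antisym less_add_one
    less_eq_div_iff_mult_less_eq less_inc_imp_less_eq)

lemma blk: "(0::nat) < m \<Longrightarrow> 1 \<le> c \<Longrightarrow> (i*m+1 \<le> c \<and> c \<le> (i+1)*m) \<longleftrightarrow> i = (c-1) div m"
proof -
  assume "0 < m" "1 \<le> c"
  then have "(i*m+1 \<le> c \<and> c \<le> (i+1)*m) \<longleftrightarrow> (i*m \<le> c-1 \<and> c-1 < (i+1)*m)" by linarith
  then show ?thesis using blk0[of m i "c-1"] \<open>0 < m\<close> by simp
qed

lemma inc_path_eq:
  "leaf < 2^k \<Longrightarrow> d \<le> k \<Longrightarrow> inc_path k leaf d T =
     ((\<lambda>d' i'. if d' \<le> d \<and> i' = leaf div 2^(k-d') then T d' i' + 1 else T d' i'), Suc d)"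
proof (induction d)
  case 0
  then show ?case by (auto simp: fun_eq_iff)
next
  case (Suc d)
  then show ?case by (auto simp: fun_eq_iff Let_def)
qed

lemma mark_used_correct:
  assumes v: "valid_palette k P" and c: "1 \<le> c" "c \<le> 2^k" and na: "\<not> pA P c"
    and mu: "mark_used k P c e = (P', t)"
  shows "pA P' = (pA P)(c := True) \<and> pC P' = (pC P)(c := Some e) \<and> valid_palette k P' \<and> t = k + 3"
proof -
  have ip: "inc_path k (c-1) k (pT P) =
     ((\<lambda>d' i'. if d' \<le> k \<and> i' = (c-1) div 2^(k-d') then pT P d' i' + 1 else pT P d' i'), Suc k)"
    using c by (intro inc_path_eq) auto
  have P': "P' = P\<lparr>pA := (pA P)(c := True), pC := (pC P)(c := Some e),
      pT := (\<lambda>d' i'. if d' \<le> k \<and> i' = (c-1) div 2^(k-d') then pT P d' i' + 1 else pT P d' i')\<rparr>"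
    and t: "t = k + 3"
    using mu ip unfolding mark_used_def by auto
  have tree: "(\<lambda>d' i'. if d' \<le> k \<and> i' = (c-1) div 2^(k-d') then pT P d' i' + 1 else pT P d' i') d i
      = card {x \<in> {i * 2^(k-d) + 1 .. (i+1) * 2^(k-d)}. ((pA P)(c := True)) x}"
    if "d \<le> k" "i < 2^d" for d i
  proof -
    let ?B = "{i * 2^(k-d) + 1 .. (i+1) * 2^(k-d)}"
    have old: "pT P d i = card {x \<in> ?B. pA P x}" using v that unfolding valid_palette_def by blast
    have mem: "c \<in> ?B \<longleftrightarrow> i = (c-1) div 2^(k-d)" using blk[of "2^(k-d)" c i] c by auto
    show ?thesis
    proof (cases "c \<in> ?B")
      case True
      have "{x \<in> ?B. ((pA P)(c := True)) x} = insert c {x \<in> ?B. pA P x}" using True by auto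
      then have "card {x \<in> ?B. ((pA P)(c := True)) x} = Suc (card {x \<in> ?B. pA P x})"
        using na by simp
      moreover have "(\<lambda>d' i'. if d' \<le> k \<and> i' = (c-1) div 2^(k-d') then pT P d' i' + 1 else pT P d' i') d i
        = Suc (pT P d i)" using True mem that by simp
      ultimately show ?thesis using old by simp
    next
      case False
      have "{x \<in> ?B. ((pA P)(c := True)) x} = {x \<in> ?B. pA P x}" using False by auto
      moreover have "(\<lambda>d' i'. if d' \<le> k \<and> i' = (c-1) div 2^(k-d') then pT P d' i' + 1 else pT P d' i') d i
        = pT P d i" proof -
          have "i \<noteq> (c-1) div 2^(k-d)" using False mem by blast
          then show ?thesis by simp
        qed
      ultimately show ?thesis using old by simp
    qed
  qed
  have "valid_palette k P'"
    unfolding valid_palette_def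
  proof (intro conjI allI impI)
    fix x assume "pA P' x" then show "x \<in> {1..2^k}"
      using v c P' unfolding valid_palette_def by (auto split: if_splits)
  next
    fix x show "(pC P' x \<noteq> None) = pA P' x"
      using v P' unfolding valid_palette_def by auto
  next
    fix d i :: nat assume "d \<le> k" "i < 2^d"
    then show "pT P' d i = card {x \<in> {i * 2^(k-d) + 1 .. (i+1) * 2^(k-d)}. pA P' x}"
      using tree[of d i] P' by simp
  qed
  then show ?thesis using P' t by simp
qed

lemma k_bound:
  assumes "(\<Delta>::nat) \<ge> 1"
  shows "real (pal_k \<Delta>) \<le> log 2 (real \<Delta>) + 2" "log 2 (real \<Delta>) \<ge> 0"
proof -
  have d: "real \<Delta> \<ge> 1" using assms by simp
  have x0: "log 2 (2 * real \<Delta> - 1) \<ge> 0" using d by simp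
  have "log 2 (2 * real \<Delta> - 1) \<le> log 2 (2 * real \<Delta>)" using d by simp
  also have "\<dots> = 1 + log 2 (real \<Delta>)" using d by (simp add: log_mult)
  finally have x1: "log 2 (2 * real \<Delta> - 1) \<le> 1 + log 2 (real \<Delta>)" .
  have "real (pal_k \<Delta>) = real_of_int \<lceil>log 2 (2 * real \<Delta> - 1)\<rceil>"
    unfolding pal_k_def using x0 by simp
  also have "\<dots> < log 2 (2 * real \<Delta> - 1) + 1" by linarith
  finally show "real (pal_k \<Delta>) \<le> log 2 (real \<Delta>) + 2" using x1 by linarith
  show "log 2 (real \<Delta>) \<ge> 0" using d by simp
qed

lemma UU_total:
  assumes "valid_palette k P"
  shows "UU (pA P) (2^k) = used_count P" "UU (pA P) x \<le> used_count P"
proof -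
  have sub: "{c. pA P c} \<subseteq> {1..2^k}" using assms unfolding valid_palette_def by blast
  then have fin: "finite {c. pA P c}" by (rule finite_subset) simp
  have "{c \<in> {1..2^k}. pA P c} = {c. pA P c}" using sub by auto
  then show "UU (pA P) (2^k) = used_count P" unfolding UU_def used_count_def by simp
  show "UU (pA P) x \<le> used_count P" unfolding UU_def used_count_def
    by (rule card_mono[OF fin]) auto
qed

theorem theorem1:
  shows "\<exists>Cst::real. \<forall>(\<Delta>::nat) (P::'e palette) (Q::'e palette) (a::nat) (b::nat) (e::'e)
            c P' Q' t.
     \<Delta> \<ge> 1 \<and> valid_palette (pal_k \<Delta>) P \<and> valid_palette (pal_k \<Delta>) Q \<and>
     used_count P = a \<and> used_count Q = b \<and> a + b + 1 \<le> pal_N \<Delta> \<and>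
     find_and_mark (pal_k \<Delta>) P Q e = (c, P', Q', t)
     \<longrightarrow> c \<in> {1..a+b+1} \<and>
         available (pal_k \<Delta>) P c \<and> available (pal_k \<Delta>) Q c \<and>
         pA P' = (pA P)(c := True) \<and> pC P' = (pC P)(c := Some e) \<and>
         valid_palette (pal_k \<Delta>) P' \<and>
         pA Q' = (pA Q)(c := True) \<and> pC Q' = (pC Q)(c := Some e) \<and>
         valid_palette (pal_k \<Delta>) Q' \<and>
         real t \<le> Cst * (1 + log 2 (real \<Delta>))"
proof (rule exI[of _ 17], intro allI impI, elim conjE)
  fix \<Delta> :: nat and P Q :: "'e palette" and a b :: nat and e :: 'e and c P' Q' t
  assume D: "\<Delta> \<ge> 1" and vP: "valid_palette (pal_k \<Delta>) P" and vQ: "valid_palette (pal_k \<Delta>) Q"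
    and ua: "used_count P = a" and ub: "used_count Q = b" and ab: "a + b + 1 \<le> pal_N \<Delta>"
    and fm: "find_and_mark (pal_k \<Delta>) P Q e = (c, P', Q', t)"
  define k where "k = pal_k \<Delta>"
  obtain j t1 where desc: "descend k k (pT P) (pT Q) 0 0 = (j, t1)" by (cases "descend k k (pT P) (pT Q) 0 0")
  obtain P'' t2 where mP: "mark_used k P (j+1) e = (P'', t2)" by (cases "mark_used k P (j+1) e")
  obtain Q'' t3 where mQ: "mark_used k Q (j+1) e = (Q'', t3)" by (cases "mark_used k Q (j+1) e")
  have fm': "c = j + 1" "P' = P''" "Q' = Q''" "t = t1 + t2 + t3 + 1"
    using fm desc mP mQ unfolding find_and_mark_def k_def[symmetric] by auto
  have T1: "\<forall>d'\<le>k. \<forall>i'<2^d'. pT P d' i' = card {c \<in> {i' * 2^(k-d') + 1 .. (i'+1) * 2^(k-d')}. pA P c}"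
    using vP unfolding valid_palette_def k_def by blast
  have T2: "\<forall>d'\<le>k. \<forall>i'<2^d'. pT Q d' i' = card {c \<in> {i' * 2^(k-d') + 1 .. (i'+1) * 2^(k-d')}. pA Q c}"
    using vQ unfolding valid_palette_def k_def by blast
  have U0: "UU A 0 = 0" for A unfolding UU_def by simp
  have N: "pal_N \<Delta> = 2^k" unfolding pal_N_def k_def ..
  have R: "snd (descend k k (pT P) (pT Q) 0 0) = 3*k \<and> fst (descend k k (pT P) (pT Q) 0 0) < 2^k \<and>
     \<not> pA P (fst (descend k k (pT P) (pT Q) 0 0) + 1) \<and> \<not> pA Q (fst (descend k k (pT P) (pT Q) 0 0) + 1) \<and>
     fst (descend k k (pT P) (pT Q) 0 0) \<le> UU (pA P) (fst (descend k k (pT P) (pT Q) 0 0)) + UU (pA Q) (fst (descend k k (pT P) (pT Q) 0 0))"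
    apply (rule descend_correct[OF _ _ T1 T2])
    using UU_total(1)[OF vP[folded k_def]] UU_total(1)[OF vQ[folded k_def]] ua ub ab N U0 by auto
  then have r: "t1 = 3*k" "j < 2^k" "\<not> pA P (j+1)" "\<not> pA Q (j+1)" "j \<le> UU (pA P) j + UU (pA Q) j"
    using desc by auto
  have jab: "j \<le> a + b" using r(5) UU_total(2)[OF vP[folded k_def], of j] UU_total(2)[OF vQ[folded k_def], of j] ua ub
    by linarith
  have MP: "pA P'' = (pA P)(j+1 := True) \<and> pC P'' = (pC P)(j+1 := Some e) \<and> valid_palette k P'' \<and> t2 = k + 3"
    by (rule mark_used_correct[OF vP[folded k_def] _ _ r(3) mP]) (use r in auto)
  have MQ: "pA Q'' = (pA Q)(j+1 := True) \<and> pC Q'' = (pC Q)(j+1 := Some e) \<and> valid_palette k Q'' \<and> t3 = k + 3"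
    by (rule mark_used_correct[OF vQ[folded k_def] _ _ r(4) mQ]) (use r in auto)
  have tt: "t = 5*k + 7" using fm'(4) r(1) MP MQ by simp
  have kb: "real k \<le> log 2 (real \<Delta>) + 2" "log 2 (real \<Delta>) \<ge> 0" using k_bound[OF D] k_def by auto
  have "real t \<le> 17 * (1 + log 2 (real \<Delta>))" using tt kb by simp
  then show "c \<in> {1..a+b+1} \<and>
         available (pal_k \<Delta>) P c \<and> available (pal_k \<Delta>) Q c \<and>
         pA P' = (pA P)(c := True) \<and> pC P' = (pC P)(c := Some e) \<and>
         valid_palette (pal_k \<Delta>) P' \<and>
         pA Q' = (pA Q)(c := True) \<and> pC Q' = (pC Q)(c := Some e) \<and>
         valid_palette (pal_k \<Delta>) Q' \<and>
         real t \<le> 17 * (1 + log 2 (real \<Delta>))"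
    using fm' MP MQ r jab unfolding available_def k_def[symmetric] by auto
qed

end
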